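(* For every integer $k\ge0$ and every $\mathbf q\in C^{k+1}[-1,1]\times C^k[-1,1]$, $$\operatorname{Re}\langle\tilde{\mathbf L}\mathbf q,\mathbf q\rangle_k\le-\tfrac12\|\mathbf q\|_k^2 .$$
   Context: $\tilde{\mathbf L}\mathbf q=\big(-y\partial_yq_1+q_2-q_1(-1),\ \partial_y^2q_1-q_2-y\partial_yq_2\big)$, where $q_1(-1)$ denotes the constant function with that value. For $\mathbf q,\tilde{\mathbf q}$ sufficiently smooth: $\langle\mathbf q,\tilde{\mathbf q}\rangle_0=\int_{-1}^1\partial_yq_1\overline{\partial_y\tilde q_1}\,dy+\int_{-1}^1q_2\overline{\tilde q_2}\,dy+q_1(-1)\overline{\tilde q_1(-1)}$, and for $k\ge1$: $\langle\mathbf q,\tilde{\mathbf q}\rangle_k=\int_{-1}^1\partial_y^{k+1}q_1\overline{\partial_y^{k+1}\tilde q_1}\,dy+\int_{-1}^1\partial_y^kq_2\overline{\partial_y^k\tilde q_2}\,dy+\langle\mathbf q,\tilde{\mathbf q}\rangle_0$; $\|\mathbf q\|_k^2=\langle\mathbf q,\mathbf q\rangle_k$. *)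

theory Defs
  imports "HOL-Analysis.Analysis"
begin

text \<open>Functions on [-1,1] are complex valued functions of a real variable.
  Derivatives are taken within the closed interval [-1,1] (one-sided at the endpoints).\<close>

type_synonym cfun = "real \<Rightarrow> complex"

fun Dn :: "nat \<Rightarrow> cfun \<Rightarrow> cfun" where
  "Dn 0 f = f"
| "Dn (Suc n) f = (\<lambda>x. vector_derivative (Dn n f) (at x within {-1..1}))"

definition Cn :: "nat \<Rightarrow> cfun \<Rightarrow> bool" where
  "Cn n f \<longleftrightarrow>
     (\<forall>j\<le>n. continuous_on {-1..1} (Dn j f)) \<and>
     (\<forall>j<n. \<forall>x\<in>{-1..1}. (Dn j f has_vector_derivative Dn (Suc j) f x) (at x within {-1..1}))"

definition Ltilde :: "cfun \<times> cfun \<Rightarrow> cfun \<times> cfun" where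
  "Ltilde q = (let q1 = fst q; q2 = snd q in
     (\<lambda>y. - complex_of_real y * Dn 1 q1 y + q2 y - q1 (-1),
      \<lambda>y. Dn 2 q1 y - q2 y - complex_of_real y * Dn 1 q2 y))"

definition ip0 :: "cfun \<times> cfun \<Rightarrow> cfun \<times> cfun \<Rightarrow> complex" where
  "ip0 q p = integral {-1..1} (\<lambda>y. Dn 1 (fst q) y * cnj (Dn 1 (fst p) y))
           + integral {-1..1} (\<lambda>y. snd q y * cnj (snd p y))
           + fst q (-1) * cnj (fst p (-1))"

definition ipk :: "nat \<Rightarrow> cfun \<times> cfun \<Rightarrow> cfun \<times> cfun \<Rightarrow> complex" where
  "ipk k q p = (if k = 0 then ip0 q p else
       integral {-1..1} (\<lambda>y. Dn (k+1) (fst q) y * cnj (Dn (k+1) (fst p) y))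
     + integral {-1..1} (\<lambda>y. Dn k (snd q) y * cnj (Dn k (snd p) y))
     + ip0 q p)"

definition normk_sq :: "nat \<Rightarrow> cfun \<times> cfun \<Rightarrow> real" where
  "normk_sq k q = Re (ipk k q q)"

end

theory Submission
  imports Defs
begin

lemma ibp_key:
  fixes u v u' v' :: "real \<Rightarrow> complex" and m :: real
  assumes du: "\<And>x. x \<in> {-1..1} \<Longrightarrow> (u has_vector_derivative u' x) (at x within {-1..1})"
    and dv: "\<And>x. x \<in> {-1..1} \<Longrightarrow> (v has_vector_derivative v' x) (at x within {-1..1})"
    and cu': "continuous_on {-1..1} u'" and cv': "continuous_on {-1..1} v'"
  defines "A \<equiv> \<lambda>y. - complex_of_real y * u' y - of_real m * u y + v' y"
    and "B \<equiv> \<lambda>y. u' y - of_real m * v y - complex_of_real y * v' y"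
  defines "YA \<equiv> integral {-1..1} (\<lambda>y. A y * cnj (u y))"
    and "YB \<equiv> integral {-1..1} (\<lambda>y. B y * cnj (v y))"
    and "NU \<equiv> integral {-1..1} (\<lambda>y. u y * cnj (u y))"
    and "NV \<equiv> integral {-1..1} (\<lambda>y. v y * cnj (v y))"
  shows "YA + YB + cnj (YA + YB) + (NU + NV) =
     - 2 * of_real (m - 1) * (NU + NV) - (u 1 - v 1) * cnj (u 1 - v 1)
     - (u (-1) + v (-1)) * cnj (u (-1) + v (-1))"
proof -
  let ?I = "{-1..1::real}"
  have cu: "continuous_on ?I u" using du by (rule continuous_on_vector_derivative)
  have cv: "continuous_on ?I v" using dv by (rule continuous_on_vector_derivative)
  have cA: "continuous_on ?I A" unfolding A_def by (intro continuous_intros cu cv cu' cv')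
  have cB: "continuous_on ?I B" unfolding B_def by (intro continuous_intros cu cv cu' cv')
  have hA: "((\<lambda>y. A y * cnj (u y)) has_integral YA) ?I" unfolding YA_def
    by (intro integrable_integral integrable_continuous_interval continuous_intros cA cu)
  have hB: "((\<lambda>y. B y * cnj (v y)) has_integral YB) ?I" unfolding YB_def
    by (intro integrable_integral integrable_continuous_interval continuous_intros cB cv)
  have hU: "((\<lambda>y. u y * cnj (u y)) has_integral NU) ?I" unfolding NU_def
    by (intro integrable_integral integrable_continuous_interval continuous_intros cu)
  have hV: "((\<lambda>y. v y * cnj (v y)) has_integral NV) ?I" unfolding NV_def
    by (intro integrable_integral integrable_continuous_interval continuous_intros cv)
  define R where "R \<equiv> \<lambda>y. complex_of_real y * (u y * cnj (u y) + v y * cnj (v y)) - (v y * cnj (u y) + u y * cnj (v y))"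
  define R' where "R' \<equiv> \<lambda>y. (u y * cnj (u y) + v y * cnj (v y))
     + complex_of_real y * (u y * cnj (u' y) + u' y * cnj (u y) + (v y * cnj (v' y) + v' y * cnj (v y)))
     - (v y * cnj (u' y) + v' y * cnj (u y) + (u y * cnj (v' y) + u' y * cnj (v y)))"
  have dR: "(R has_vector_derivative R' x) (at x within ?I)" if "x \<in> ?I" for x
    unfolding R_def R'_def
    by (rule derivative_eq_intros du[OF that] dv[OF that] refl | simp)+
  have hR: "(R' has_integral (R 1 - R (-1))) ?I"
    by (rule fundamental_theorem_of_calculus) (auto intro: dR)
  have h1: "((\<lambda>y. A y * cnj (u y) + B y * cnj (v y) + (cnj (A y * cnj (u y)) + cnj (B y * cnj (v y))) + (u y * cnj (u y) + v y * cnj (v y)))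
      has_integral (YA + YB + (cnj YA + cnj YB) + (NU + NV))) ?I"
    using hA hB hU hV has_integral_cnj[of "\<lambda>y. A y * cnj (u y)" YA ?I] has_integral_cnj[of "\<lambda>y. B y * cnj (v y)" YB ?I]
    by (intro has_integral_add) (auto simp: o_def)
  have h2: "((\<lambda>y. (- 2 * of_real (m - 1)) * (u y * cnj (u y) + v y * cnj (v y)) - R' y)
      has_integral ((- 2 * of_real (m - 1)) * (NU + NV) - (R 1 - R (-1)))) ?I"
    by (intro has_integral_diff has_integral_mult_right has_integral_add hU hV hR)
  have h3: "((\<lambda>y. A y * cnj (u y) + B y * cnj (v y) + (cnj (A y * cnj (u y)) + cnj (B y * cnj (v y))) + (u y * cnj (u y) + v y * cnj (v y)))
      has_integral ((- 2 * of_real (m - 1)) * (NU + NV) - (R 1 - R (-1)))) ?I"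
    by (rule has_integral_eq[OF _ h2]) (simp add: A_def B_def R'_def algebra_simps)
  have "YA + YB + (cnj YA + cnj YB) + (NU + NV) = (- 2 * of_real (m - 1)) * (NU + NV) - (R 1 - R (-1))"
    using has_integral_unique[OF h1 h3] .
  then show ?thesis by (simp add: R_def algebra_simps)
qed


lemma Dn_chain:
  assumes F0: "\<forall>x\<in>{-1..1}. F 0 x = f x"
  and FD: "\<forall>j<n. \<forall>x\<in>{-1..1}. (F j has_vector_derivative F (Suc j) x) (at x within {-1..1})"
  shows "j \<le> n \<Longrightarrow> x \<in> {-1..1} \<Longrightarrow> Dn j f x = F j x"
proof (induction j arbitrary: x)
  case 0 thus ?case using F0 by simp
next
  case (Suc j)
  have "(Dn j f has_vector_derivative F (Suc j) x) (at x within {-1..1})"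
    by (rule has_vector_derivative_transform[OF Suc.prems(2) _ FD[rule_format]]) (use Suc in auto)
  then show ?case using vector_derivative_within_closed_interval[of "-1" 1 x "Dn j f"] Suc.prems by simp
qed

lemma Cn_D: "Cn n f \<Longrightarrow> j < n \<Longrightarrow> x \<in> {-1..1} \<Longrightarrow> (Dn j f has_vector_derivative Dn (Suc j) f x) (at x within {-1..1})"
  unfolding Cn_def by blast

lemma Cn_C: "Cn n f \<Longrightarrow> j \<le> n \<Longrightarrow> continuous_on {-1..1} (Dn j f)"
  unfolding Cn_def by blast

lemma Re_int_nonneg:
  fixes f :: "real \<Rightarrow> complex"
  assumes "continuous_on {-1..1} f"
  shows "0 \<le> Re (integral {-1..1} (\<lambda>y. f y * cnj (f y)))"
proof -
  have "((\<lambda>y. f y * cnj (f y)) has_integral (integral {-1..1} (\<lambda>y. f y * cnj (f y)))) {-1..1}"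
    by (intro integrable_integral integrable_continuous_interval continuous_intros assms)
  from has_integral_linear[OF this bounded_linear_Re]
  show ?thesis by (rule has_integral_nonneg) simp
qed

theorem mainTheorem7:
  fixes k :: nat and q1 q2 :: "real \<Rightarrow> complex"
  assumes "Cn (k+2) q1" and "Cn (k+1) q2"
  shows "Re (ipk k (Ltilde (q1, q2)) (q1, q2)) \<le> - (1/2) * normk_sq k (q1, q2)"
proof -
  let ?I = "{-1..1::real}"
  note d1 = Cn_D[OF assms(1)] and d2 = Cn_D[OF assms(2)]
  note c1 = Cn_C[OF assms(1)] and c2 = Cn_C[OF assms(2)]
  define L1 where "L1 = fst (Ltilde (q1,q2))"
  define L2 where "L2 = snd (Ltilde (q1,q2))"
  have L1e: "L1 = (\<lambda>y. - complex_of_real y * Dn 1 q1 y + q2 y - q1 (-1))" by (simp add: L1_def Ltilde_def)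
  have L2e: "L2 = (\<lambda>y. Dn 2 q1 y - q2 y - complex_of_real y * Dn 1 q2 y)" by (simp add: L2_def Ltilde_def)
  define F where "F = (\<lambda>j. case j of 0 \<Rightarrow> L1 | Suc i \<Rightarrow> (\<lambda>y. - complex_of_real y * Dn (Suc (Suc i)) q1 y
       - complex_of_real (real (Suc i)) * Dn (Suc i) q1 y + Dn (Suc i) q2 y))"
  have FD: "\<forall>j<k+1. \<forall>x\<in>?I. (F j has_vector_derivative F (Suc j) x) (at x within ?I)"
  proof (intro allI impI ballI)
    fix j x assume j: "j < k+1" and x: "x \<in> ?I"
    show "(F j has_vector_derivative F (Suc j) x) (at x within ?I)"
    proof (cases j)
      case 0
      have a: "(Dn (Suc 0) q1 has_vector_derivative Dn (Suc (Suc 0)) q1 x) (at x within ?I)" using d1[of 1 x] x by simp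
      have b: "(q2 has_vector_derivative Dn 1 q2 x) (at x within ?I)" using d2[of 0 x] x by simp
      show ?thesis unfolding 0 F_def L1e
        apply (simp del: Dn.simps)
        apply (rule has_vector_derivative_eq_rhs)
         apply (rule derivative_eq_intros a b refl has_vector_derivative_const)+
        apply (simp del: Dn.simps add: algebra_simps numeral_2_eq_2)
        done
    next
      case (Suc i)
      have a: "(Dn (Suc (Suc i)) q1 has_vector_derivative Dn (Suc (Suc (Suc i))) q1 x) (at x within ?I)" using d1[of "Suc (Suc i)" x] x j Suc by simp
      have a2: "(Dn (Suc i) q1 has_vector_derivative Dn (Suc (Suc i)) q1 x) (at x within ?I)" using d1[of "Suc i" x] x j Suc by simp
      have b: "(Dn (Suc i) q2 has_vector_derivative Dn (Suc (Suc i)) q2 x) (at x within ?I)" using d2[of "Suc i" x] x j Suc by simp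
      show ?thesis unfolding Suc F_def
        apply (simp del: Dn.simps)
        apply (rule has_vector_derivative_eq_rhs)
         apply (rule derivative_eq_intros a a2 b refl)+
        apply (simp del: Dn.simps add: algebra_simps)
        done
    qed
  qed
  have F0: "\<forall>x\<in>?I. F 0 x = L1 x" by (simp add: F_def)
  note DF = Dn_chain[OF F0 FD]
  define G where "G = (\<lambda>j y. Dn (Suc (Suc j)) q1 y - complex_of_real (real (Suc j)) * Dn j q2 y
       - complex_of_real y * Dn (Suc j) q2 y)"
  have GD: "\<forall>j<k. \<forall>x\<in>?I. (G j has_vector_derivative G (Suc j) x) (at x within ?I)"
  proof (intro allI impI ballI)
    fix j x assume j: "j < k" and x: "x \<in> ?I"
    have a: "(Dn (Suc (Suc j)) q1 has_vector_derivative Dn (Suc (Suc (Suc j))) q1 x) (at x within ?I)" using d1[of "Suc (Suc j)" x] x j by simp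
    have b: "(Dn j q2 has_vector_derivative Dn (Suc j) q2 x) (at x within ?I)" using d2[of j x] x j by simp
    have b2: "(Dn (Suc j) q2 has_vector_derivative Dn (Suc (Suc j)) q2 x) (at x within ?I)" using d2[of "Suc j" x] x j by simp
    show "(G j has_vector_derivative G (Suc j) x) (at x within ?I)"
      unfolding G_def
      apply (rule has_vector_derivative_eq_rhs)
       apply (rule derivative_eq_intros a b b2 refl has_vector_derivative_const)+
      apply (simp del: Dn.simps add: algebra_simps)
      done
  qed
  have G0: "\<forall>x\<in>?I. G 0 x = L2 x" by (simp del: Dn.simps add: G_def L2e numeral_2_eq_2 Dn.simps(1))
  note DG = Dn_chain[OF G0 GD]
  define Y where "Y j = integral ?I (\<lambda>y. F (Suc j) y * cnj (Dn (Suc j) q1 y)) + integral ?I (\<lambda>y. G j y * cnj (Dn j q2 y))" for j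
  define N where "N j = integral ?I (\<lambda>y. Dn (Suc j) q1 y * cnj (Dn (Suc j) q1 y)) + integral ?I (\<lambda>y. Dn j q2 y * cnj (Dn j q2 y))" for j
  have key: "Y j + cnj (Y j) + N j = - 2 * of_real (real j) * N j
      - (Dn (Suc j) q1 1 - Dn j q2 1) * cnj (Dn (Suc j) q1 1 - Dn j q2 1)
      - (Dn (Suc j) q1 (-1) + Dn j q2 (-1)) * cnj (Dn (Suc j) q1 (-1) + Dn j q2 (-1))" if j: "j \<le> k" for j
  proof -
    have h1: "\<And>x. x \<in> ?I \<Longrightarrow> (Dn (Suc j) q1 has_vector_derivative Dn (Suc (Suc j)) q1 x) (at x within ?I)"
      using d1[of "Suc j"] j by (simp del: Dn.simps)
    have h2: "\<And>x. x \<in> ?I \<Longrightarrow> (Dn j q2 has_vector_derivative Dn (Suc j) q2 x) (at x within ?I)"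
      using d2[of j] j by (simp del: Dn.simps)
    have h3: "continuous_on ?I (Dn (Suc (Suc j)) q1)" using c1[of "Suc (Suc j)"] j by (simp del: Dn.simps)
    have h4: "continuous_on ?I (Dn (Suc j) q2)" using c2[of "Suc j"] j by (simp del: Dn.simps)
    note K = ibp_key[of "Dn (Suc j) q1" "Dn (Suc (Suc j)) q1" "Dn j q2" "Dn (Suc j) q2" "real (Suc j)", OF h1 h2 h3 h4]
    from K show ?thesis unfolding Y_def N_def F_def G_def by (simp del: Dn.simps)
  qed
  have ReN: "0 \<le> Re (N j)" if "j \<le> k" for j
  proof -
    have "continuous_on ?I (Dn (Suc j) q1)" using c1[of "Suc j"] that by (simp del: Dn.simps)
    moreover have "continuous_on ?I (Dn j q2)" using c2[of j] that by (simp del: Dn.simps)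
    ultimately show ?thesis unfolding N_def using Re_int_nonneg by (simp del: Dn.simps add: add_nonneg_nonneg)
  qed
  have sq: "0 \<le> Re (z * cnj z)" for z :: complex by simp
  have ipL0: "ip0 (Ltilde (q1, q2)) (q1, q2) = Y 0 + L1 (-1) * cnj (q1 (-1))"
  proof -
    have "integral ?I (\<lambda>y. Dn 1 L1 y * cnj (Dn 1 q1 y)) = integral ?I (\<lambda>y. F (Suc 0) y * cnj (Dn (Suc 0) q1 y))"
      by (rule integral_cong) (use DF[of "Suc 0"] in auto)
    moreover have "integral ?I (\<lambda>y. L2 y * cnj (q2 y)) = integral ?I (\<lambda>y. G 0 y * cnj (Dn 0 q2 y))"
      by (rule integral_cong) (use DG[of 0] in auto)
    ultimately show ?thesis unfolding ip0_def Y_def L1_def[symmetric] L2_def[symmetric] by simp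
  qed
  have ipq0: "ip0 (q1, q2) (q1, q2) = N 0 + q1 (-1) * cnj (q1 (-1))"
    unfolding ip0_def N_def by simp
  have L1m: "L1 (-1) = Dn (Suc 0) q1 (-1) + Dn 0 q2 (-1) - q1 (-1)"
    unfolding L1e by simp
  define c where "c = q1 (-1)"
  define b where "b = Dn (Suc 0) q1 (-1) + Dn 0 q2 (-1)"
  define a where "a = Dn (Suc 0) q1 1 - Dn 0 q2 1"
  have Z0: "ip0 (Ltilde (q1, q2)) (q1, q2) + cnj (ip0 (Ltilde (q1, q2)) (q1, q2)) + ip0 (q1, q2) (q1, q2)
      = - (a * cnj a) - (b - c) * cnj (b - c)"
  proof -
    have k0: "Y 0 + cnj (Y 0) + N 0 = - (a * cnj a) - b * cnj b"
      using key[of 0] unfolding a_def b_def by simp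
    have "ip0 (Ltilde (q1, q2)) (q1, q2) + cnj (ip0 (Ltilde (q1, q2)) (q1, q2)) + ip0 (q1, q2) (q1, q2)
       = (Y 0 + cnj (Y 0) + N 0) + ((b - c) * cnj c + cnj ((b - c) * cnj c) + c * cnj c)"
      unfolding ipL0 ipq0 L1m b_def[symmetric] c_def[symmetric] by (simp add: algebra_simps)
    also have "\<dots> = - (a * cnj a) - b * cnj b + ((b - c) * cnj c + cnj ((b - c) * cnj c) + c * cnj c)"
      by (simp only: k0)
    also have "\<dots> = - (a * cnj a) - (b - c) * cnj (b - c)"
      by (simp add: algebra_simps)
    finally show ?thesis .
  qed
  have R0: "2 * Re (ip0 (Ltilde (q1, q2)) (q1, q2)) + Re (ip0 (q1, q2) (q1, q2)) \<le> 0"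
  proof -
    have "Re (- (a * cnj a) - (b - c) * cnj (b - c)) = - Re (a * cnj a) - Re ((b - c) * cnj (b - c))"
      by (simp only: minus_complex.sel uminus_complex.sel)
    then have "Re (- (a * cnj a) - (b - c) * cnj (b - c)) \<le> 0" using sq[of a] sq[of "b - c"] by linarith
    then show ?thesis using arg_cong[OF Z0, of Re] by simp
  qed
  show ?thesis
  proof (cases "k = 0")
    case True
    then show ?thesis using R0 unfolding ipk_def normk_sq_def by simp
  next
    case False
    have ipLk: "ipk k (Ltilde (q1, q2)) (q1, q2) = Y k + ip0 (Ltilde (q1, q2)) (q1, q2)"
    proof -
      have "integral ?I (\<lambda>y. Dn (k+1) L1 y * cnj (Dn (k+1) q1 y)) = integral ?I (\<lambda>y. F (Suc k) y * cnj (Dn (Suc k) q1 y))"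
        by (rule integral_cong) (use DF[of "Suc k"] in auto)
      moreover have "integral ?I (\<lambda>y. Dn k L2 y * cnj (Dn k q2 y)) = integral ?I (\<lambda>y. G k y * cnj (Dn k q2 y))"
        by (rule integral_cong) (use DG[of k] in auto)
      ultimately show ?thesis unfolding ipk_def Y_def L1_def[symmetric] L2_def[symmetric] using False
        by (simp del: Dn.simps)
    qed
    have ipqk: "ipk k (q1, q2) (q1, q2) = N k + ip0 (q1, q2) (q1, q2)"
      unfolding ipk_def N_def using False by (simp del: Dn.simps)
    have "Re (Y k + cnj (Y k) + N k) \<le> 0"
    proof -
      have "Re (Y k + cnj (Y k) + N k) = - 2 * real k * Re (N k)
        - Re ((Dn (Suc k) q1 1 - Dn k q2 1) * cnj (Dn (Suc k) q1 1 - Dn k q2 1))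
        - Re ((Dn (Suc k) q1 (-1) + Dn k q2 (-1)) * cnj (Dn (Suc k) q1 (-1) + Dn k q2 (-1)))"
        using arg_cong[OF key[of k], of Re] by (simp del: Dn.simps complex_mult_cnj)
      also have "\<dots> \<le> 0" using ReN[of k] sq[of "Dn (Suc k) q1 1 - Dn k q2 1"] sq[of "Dn (Suc k) q1 (-1) + Dn k q2 (-1)"]
        using mult_nonneg_nonneg[OF of_nat_0_le_iff[of k] ReN[of k, OF order_refl]] by linarith
      finally show ?thesis .
    qed
    then show ?thesis using R0 unfolding ipLk ipqk normk_sq_def by (simp add: field_simps)
  qed
qed

end
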